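(* Let $G$ be an abelian group. Then every characteristic subgroup of $G\oplus G$ is fully invariant in $G\oplus G$.
   Context: A subgroup of an abelian group $K$ is characteristic if it is mapped into itself by every automorphism of $K$, and fully invariant if it is mapped into itself by every endomorphism of $K$. *)

theory Defs
  imports "HOL-Algebra.Algebra"
begin

definition characteristic_subgroup :: "'a set \<Rightarrow> ('a, 'b) monoid_scheme \<Rightarrow> bool" where
  "characteristic_subgroup H K \<longleftrightarrow> subgroup H K \<and> (\<forall>\<phi> \<in> iso K K. \<phi> ` H \<subseteq> H)"

definition fully_invariant_subgroup :: "'a set \<Rightarrow> ('a, 'b) monoid_scheme \<Rightarrow> bool" where
  "fully_invariant_subgroup H K \<longleftrightarrow> subgroup H K \<and> (\<forall>\<phi> \<in> hom K K. \<phi> ` H \<subseteq> H)"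

end

theory Submission
  imports Defs
begin

lemma shear_iso:
  fixes G (structure)
  assumes G: "comm_group G" and f: "f \<in> hom G G"
  shows "(\<lambda>(x,y). (x \<otimes>\<^bsub>G\<^esub> f y, y)) \<in> iso (G \<times>\<times> G) (G \<times>\<times> G)"
proof -
  interpret comm_group G by fact
  have fc: "\<And>y. y \<in> carrier G \<Longrightarrow> f y \<in> carrier G" by (rule hom_in_carrier[OF f])
  have fm: "\<And>x y. x \<in> carrier G \<Longrightarrow> y \<in> carrier G \<Longrightarrow> f (x \<otimes> y) = f x \<otimes> f y"
    by (rule hom_mult[OF f])
  have h1: "(\<lambda>(x,y). (x \<otimes> f y, y)) \<in> hom (G \<times>\<times> G) (G \<times>\<times> G)"
  proof (rule homI)
    fix p assume "p \<in> carrier (G \<times>\<times> G)"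
    then obtain a b where p: "p = (a,b)" "a \<in> carrier G" "b \<in> carrier G" by auto
    show "(\<lambda>(x,y). (x \<otimes> f y, y)) p \<in> carrier (G \<times>\<times> G)" using p fc by simp
  next
    fix p q assume "p \<in> carrier (G \<times>\<times> G)" "q \<in> carrier (G \<times>\<times> G)"
    then obtain a b c d where p: "p = (a,b)" "q = (c,d)" and
      c: "a \<in> carrier G" "b \<in> carrier G" "c \<in> carrier G" "d \<in> carrier G" by auto
    have "a \<otimes> c \<otimes> f (b \<otimes> d) = a \<otimes> f b \<otimes> (c \<otimes> f d)"
      using c fc fm by (simp add: m_ac)
    then show "(\<lambda>(x,y). (x \<otimes> f y, y)) (p \<otimes>\<^bsub>G \<times>\<times> G\<^esub> q) =
      (\<lambda>(x,y). (x \<otimes> f y, y)) p \<otimes>\<^bsub>G \<times>\<times> G\<^esub> (\<lambda>(x,y). (x \<otimes> f y, y)) q"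
      using p by simp
  qed
  have inj: "inj_on (\<lambda>(x,y). (x \<otimes> f y, y)) (carrier (G \<times>\<times> G))"
  proof (rule inj_onI)
    fix p q assume "p \<in> carrier (G \<times>\<times> G)" "q \<in> carrier (G \<times>\<times> G)"
      and e: "(\<lambda>(x,y). (x \<otimes> f y, y)) p = (\<lambda>(x,y). (x \<otimes> f y, y)) q"
    then obtain a b c d where p: "p = (a,b)" "q = (c,d)" and
      c: "a \<in> carrier G" "b \<in> carrier G" "c \<in> carrier G" "d \<in> carrier G" by auto
    have bd: "b = d" and eq: "a \<otimes> f b = c \<otimes> f d" using e p by auto
    have "a \<otimes> f b = c \<otimes> f b" using eq bd by simp
    then have "a = c" using c fc by simp
    then show "p = q" using p bd by simp
  qed
  have surj: "(\<lambda>(x,y). (x \<otimes> f y, y)) ` carrier (G \<times>\<times> G) = carrier (G \<times>\<times> G)"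
  proof
    show "(\<lambda>(x,y). (x \<otimes> f y, y)) ` carrier (G \<times>\<times> G) \<subseteq> carrier (G \<times>\<times> G)"
      by (rule hom_carrier[OF h1])
  next
    show "carrier (G \<times>\<times> G) \<subseteq> (\<lambda>(x,y). (x \<otimes> f y, y)) ` carrier (G \<times>\<times> G)"
    proof
      fix p assume "p \<in> carrier (G \<times>\<times> G)"
      then obtain a b where p: "p = (a,b)" "a \<in> carrier G" "b \<in> carrier G" by auto
      have fb: "f b \<in> carrier G" by (rule fc[OF p(3)])
      have "a \<otimes> inv (f b) \<otimes> f b = a" using p fb by (simp add: m_assoc)
      then have e1: "p = (\<lambda>(x,y). (x \<otimes> f y, y)) (a \<otimes> inv (f b), b)" using p by simp
      have e2: "(a \<otimes> inv (f b), b) \<in> carrier (G \<times>\<times> G)" using p fb by simp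
      show "p \<in> (\<lambda>(x,y). (x \<otimes> f y, y)) ` carrier (G \<times>\<times> G)" by (rule image_eqI[where f="\<lambda>(x,y). (x \<otimes> f y, y)" and x="(a \<otimes> inv (f b), b)"]) (rule e1, rule e2)
    qed
  qed
  show ?thesis using h1 inj surj by (simp add: iso_iff)
qed

lemma swap_iso: "(\<lambda>(x,y). (y,x)) \<in> iso (G \<times>\<times> G) (G \<times>\<times> G)"
  by (rule DirProd_commute_iso_set)

lemma key:
  fixes G (structure)
  assumes G: "comm_group G" and C: "characteristic_subgroup H (G \<times>\<times> G)"
    and f: "f \<in> hom G G" and x: "x \<in> carrier G" and y: "y \<in> carrier G"
    and h: "(x,y) \<in> H"
  shows "(f y, \<one>\<^bsub>G\<^esub>) \<in> H"
proof -
  interpret comm_group G by fact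
  have sg: "subgroup H (G \<times>\<times> G)" and ch: "\<forall>\<phi> \<in> iso (G \<times>\<times> G) (G \<times>\<times> G). \<phi> ` H \<subseteq> H"
    using C by (auto simp: characteristic_subgroup_def)
  have fc: "f y \<in> carrier G" by (rule hom_in_carrier[OF f y])
  have "(\<lambda>(x,y). (x \<otimes> f y, y)) ` H \<subseteq> H" using bspec[OF ch shear_iso[OF G f]] .
  then have "(\<lambda>(x,y). (x \<otimes> f y, y)) (x,y) \<in> H" using h by (rule subsetD[OF _ imageI])
  hence 1: "(x \<otimes> f y, y) \<in> H" by simp
  have 2: "inv\<^bsub>G \<times>\<times> G\<^esub> (x,y) \<in> H" by (rule subgroup.m_inv_closed[OF sg h])
  have "(x \<otimes> f y, y) \<otimes>\<^bsub>G \<times>\<times> G\<^esub> inv\<^bsub>G \<times>\<times> G\<^esub> (x,y) \<in> H"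
    by (rule subgroup.m_closed[OF sg 1 2])
  moreover have "(x \<otimes> f y, y) \<otimes>\<^bsub>G \<times>\<times> G\<^esub> inv\<^bsub>G \<times>\<times> G\<^esub> (x,y) = (f y, \<one>)"
  proof -
    have "inv\<^bsub>G \<times>\<times> G\<^esub> (x,y) = (inv x, inv y)" using x y is_group by simp
    moreover have "x \<otimes> f y \<otimes> inv x = f y" using x fc by (metis m_assoc m_comm inv_closed r_inv r_one)
    ultimately show ?thesis using x y fc by simp
  qed
  ultimately show ?thesis by simp
qed

theorem lemma2p1:
  fixes G :: "('a, 'b) monoid_scheme" and H :: "('a \<times> 'a) set"
  assumes "comm_group G"
    and "characteristic_subgroup H (G \<times>\<times> G)"
  shows "fully_invariant_subgroup H (G \<times>\<times> G)"
proof -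
  interpret comm_group G by fact
  have sg: "subgroup H (G \<times>\<times> G)" and ch: "\<forall>\<phi> \<in> iso (G \<times>\<times> G) (G \<times>\<times> G). \<phi> ` H \<subseteq> H"
    using assms(2) by (auto simp: characteristic_subgroup_def)
  have sw: "\<And>a b. (a,b) \<in> H \<Longrightarrow> (b,a) \<in> H"
  proof -
    fix a b assume "(a,b) \<in> H"
    have "(\<lambda>(x,y). (y,x)) ` H \<subseteq> H" using bspec[OF ch swap_iso] .
    then have "(\<lambda>(x,y). (y,x)) (a,b) \<in> H" using \<open>(a,b) \<in> H\<close> by (rule subsetD[OF _ imageI])
    then show "(b,a) \<in> H" by simp
  qed
  have "\<phi> ` H \<subseteq> H" if phi: "\<phi> \<in> hom (G \<times>\<times> G) (G \<times>\<times> G)" for \<phi>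
  proof (rule image_subsetI)
    fix p assume "p \<in> H"
    obtain x y where p: "p = (x,y)" by (cases p)
    have pH: "(x,y) \<in> H" using \<open>p \<in> H\<close> p by simp
    have xy: "x \<in> carrier G" "y \<in> carrier G"
      using subgroup.subset[OF sg] pH by auto
    have i1: "(\<lambda>g. (g, \<one>\<^bsub>G\<^esub>)) \<in> hom G (G \<times>\<times> G)" by (rule homI) auto
    have i2: "(\<lambda>g. (\<one>\<^bsub>G\<^esub>, g)) \<in> hom G (G \<times>\<times> G)" by (rule homI) auto
    define a where "a = fst \<circ> \<phi> \<circ> (\<lambda>g. (g, \<one>\<^bsub>G\<^esub>))"
    define b where "b = fst \<circ> \<phi> \<circ> (\<lambda>g. (\<one>\<^bsub>G\<^esub>, g))"
    define c where "c = snd \<circ> \<phi> \<circ> (\<lambda>g. (g, \<one>\<^bsub>G\<^esub>))"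
    define d where "d = snd \<circ> \<phi> \<circ> (\<lambda>g. (\<one>\<^bsub>G\<^esub>, g))"
    have fs: "fst \<circ> \<phi> \<in> hom (G \<times>\<times> G) G" "snd \<circ> \<phi> \<in> hom (G \<times>\<times> G) G"
      using phi unfolding hom_pairwise by simp_all
    have homs: "a \<in> hom G G" "b \<in> hom G G" "c \<in> hom G G" "d \<in> hom G G"
      unfolding a_def b_def c_def d_def
      using Group.hom_compose[OF i1 fs(1)] Group.hom_compose[OF i2 fs(1)]
        Group.hom_compose[OF i1 fs(2)] Group.hom_compose[OF i2 fs(2)] by (simp_all add: comp_assoc)
    have ax: "(a x, \<one>\<^bsub>G\<^esub>) \<in> H" using key[OF assms homs(1) xy(2) xy(1) sw[OF pH]] .
    have bx: "(b y, \<one>\<^bsub>G\<^esub>) \<in> H" using key[OF assms homs(2) xy pH] .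
    have cx: "(\<one>\<^bsub>G\<^esub>, c x) \<in> H" using sw[OF key[OF assms homs(3) xy(2) xy(1) sw[OF pH]]] .
    have dx: "(\<one>\<^bsub>G\<^esub>, d y) \<in> H" using sw[OF key[OF assms homs(4) xy pH]] .
    have "(a x, \<one>\<^bsub>G\<^esub>) \<otimes>\<^bsub>G \<times>\<times> G\<^esub> (b y, \<one>\<^bsub>G\<^esub>) \<otimes>\<^bsub>G \<times>\<times> G\<^esub> ((\<one>\<^bsub>G\<^esub>, c x) \<otimes>\<^bsub>G \<times>\<times> G\<^esub> (\<one>\<^bsub>G\<^esub>, d y)) \<in> H"
      by (intro subgroup.m_closed[OF sg] ax bx cx dx)
    moreover have "\<phi> (x,y) = \<phi> ((x,\<one>\<^bsub>G\<^esub>) \<otimes>\<^bsub>G \<times>\<times> G\<^esub> (\<one>\<^bsub>G\<^esub>,y))" using xy by simp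
    moreover have "\<dots> = \<phi> (x,\<one>\<^bsub>G\<^esub>) \<otimes>\<^bsub>G \<times>\<times> G\<^esub> \<phi> (\<one>\<^bsub>G\<^esub>,y)"
      using hom_mult[OF phi, of "(x,\<one>\<^bsub>G\<^esub>)" "(\<one>\<^bsub>G\<^esub>,y)"] xy by simp
    moreover have "\<dots> = (a x \<otimes>\<^bsub>G\<^esub> b y, c x \<otimes>\<^bsub>G\<^esub> d y)"
      by (simp add: a_def b_def c_def d_def mult_DirProd')
    moreover have "(a x, \<one>\<^bsub>G\<^esub>) \<otimes>\<^bsub>G \<times>\<times> G\<^esub> (b y, \<one>\<^bsub>G\<^esub>) \<otimes>\<^bsub>G \<times>\<times> G\<^esub> ((\<one>\<^bsub>G\<^esub>, c x) \<otimes>\<^bsub>G \<times>\<times> G\<^esub> (\<one>\<^bsub>G\<^esub>, d y))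
        = (a x \<otimes>\<^bsub>G\<^esub> b y, c x \<otimes>\<^bsub>G\<^esub> d y)"
      using homs xy by (simp add: hom_in_carrier)
    ultimately show "\<phi> p \<in> H" using p by simp
  qed
  then show ?thesis using sg by (simp add: fully_invariant_subgroup_def)
qed

end
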